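(* Let $n\ge 2$. The function $\mathbf{H}:[0,1]^n\to[0,1]$ is a pre-aggregation function.
   Context: For $\mathbf{x}\in[0,1]^n$ let $x_{(1)}\ge\dots\ge x_{(n)}$ be its entries in decreasing order, and define the median $Med(\mathbf{x})=\frac12(x_{(k)}+x_{(k+1)})$ if $n=2k$ and $Med(\mathbf{x})=x_{(k+1)}$ if $n=2k+1$. Define $f_i(\mathbf{x})=\frac1n$ if $x_1=\dots=x_n$, and otherwise $f_i(\mathbf{x})=\frac{1}{n-1}\Big(1-\frac{|x_i-Med(\mathbf{x})|}{\sum_{j=1}^n|x_j-Med(\mathbf{x})|}\Big)$. Then $\mathbf{H}(\mathbf{x})=\sum_{i=1}^n f_i(\mathbf{x})\,x_i$. For a nonzero $\mathbf{r}\in\mathbb{R}^n$, $F:[0,1]^n\to[0,1]$ is $\mathbf{r}$-increasing if $F(\mathbf{x})\le F(x_1+tr_1,\dots,x_n+tr_n)$ for all $\mathbf{x}\in[0,1]^n$ and $t>0$ with $(x_1+tr_1,\dots,x_n+tr_n)\in[0,1]^n$. $F$ is a pre-aggregation function if $F(0,\dots,0)=0$, $F(1,\dots,1)=1$ and $F$ is $\mathbf{r}$-increasing for some nonzero $\mathbf{r}\in[0,1]^n$. *)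

theory Defs
  imports Complex_Main
begin

text \<open>Points of [0,1]^n are represented as real lists of length n (entry i is x_(i+1)).\<close>

definition in_cube :: "nat \<Rightarrow> real list \<Rightarrow> bool" where
  "in_cube n xs \<longleftrightarrow> length xs = n \<and> (\<forall>x\<in>set xs. 0 \<le> x \<and> x \<le> 1)"

text \<open>Median: with s = sort xs ascending, the decreasing order statistic x_(i) is s!(n-i).
  For n = 2k: (x_(k)+x_(k+1))/2 = (s!k + s!(k-1))/2; for n = 2k+1: x_(k+1) = s!k.\<close>
definition Med :: "real list \<Rightarrow> real" where
  "Med xs = (let s = sort xs; n = length xs; k = n div 2 in
      if even n then (s ! (k - 1) + s ! k) / 2 else s ! k)"

definition fw :: "real list \<Rightarrow> nat \<Rightarrow> real" where
  "fw xs i = (let n = length xs; m = Med xs in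
     if (\<forall>j<n. xs ! j = xs ! 0) then 1 / real n
     else (1 / (real n - 1)) * (1 - \<bar>xs ! i - m\<bar> / (\<Sum>j<n. \<bar>xs ! j - m\<bar>)))"

definition H :: "real list \<Rightarrow> real" where
  "H xs = (\<Sum>i<length xs. fw xs i * xs ! i)"

definition r_increasing :: "nat \<Rightarrow> (real list \<Rightarrow> real) \<Rightarrow> real list \<Rightarrow> bool" where
  "r_increasing n F r \<longleftrightarrow>
     (\<forall>x t. in_cube n x \<and> t > 0 \<and> in_cube n (map2 (\<lambda>a b. a + t * b) x r)
        \<longrightarrow> F x \<le> F (map2 (\<lambda>a b. a + t * b) x r))"

definition pre_aggregation :: "nat \<Rightarrow> (real list \<Rightarrow> real) \<Rightarrow> bool" where
  "pre_aggregation n F \<longleftrightarrow>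
     (\<forall>x. in_cube n x \<longrightarrow> 0 \<le> F x \<and> F x \<le> 1) \<and>
     F (replicate n 0) = 0 \<and> F (replicate n 1) = 1 \<and>
     (\<exists>r. in_cube n r \<and> r \<noteq> replicate n 0 \<and> r_increasing n F r)"

end

theory Submission
  imports Defs
begin

lemma insort_shift: "insort (x + t) (map (\<lambda>a. a + t) ys) = map (\<lambda>a. a + t) (insort (x::real) ys)"
  by (induction ys) auto

lemma sort_shift: "sort (map (\<lambda>a. a + t) xs) = map (\<lambda>a. a + t) (sort (xs::real list))"
  by (induction xs) (auto simp: insort_shift)

lemma Med_shift:
  assumes "length xs \<ge> 1"
  shows "Med (map (\<lambda>a. a + t) xs) = Med xs + t"
proof -
  have l: "length (sort xs) = length xs" by simp
  show ?thesis using assms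
    unfolding Med_def Let_def sort_shift
    by (auto simp: l)
qed

lemma fw_shift:
  assumes "length xs \<ge> 1"
  and "i < length xs"
  shows "fw (map (\<lambda>a. a + t) xs) i = fw xs i"
proof -
  have c: "(\<forall>j<length xs. map (\<lambda>a. a + t) xs ! j = map (\<lambda>a. a + t) xs ! 0) = (\<forall>j<length xs. xs ! j = xs ! 0)"
    proof -
    have "\<And>j. j < length xs \<Longrightarrow> (map (\<lambda>a. a + t) xs ! j = map (\<lambda>a. a + t) xs ! 0) = (xs ! j = xs ! 0)"
    proof -
      have "map (\<lambda>a. a + t) xs ! 0 = xs ! 0 + t" using assms(1) by (intro nth_map) auto
      then show "\<And>j. j < length xs \<Longrightarrow> (map (\<lambda>a. a + t) xs ! j = map (\<lambda>a. a + t) xs ! 0) = (xs ! j = xs ! 0)" by simp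
    qed
    then show ?thesis by blast
  qed
  have s: "(\<Sum>j<length xs. \<bar>map (\<lambda>a. a + t) xs ! j - (Med xs + t)\<bar>) = (\<Sum>j<length xs. \<bar>xs ! j - Med xs\<bar>)"
    by (rule sum.cong) auto
  have ii: "map (\<lambda>a. a + t) xs ! i = xs ! i + t" using assms(2) by simp
  show ?thesis unfolding fw_def Let_def Med_shift[OF assms(1)] length_map c s ii by (simp; blast)
qed

lemma fw_facts:
  assumes "length xs \<ge> 1"
  shows "(\<Sum>i<length xs. fw xs i) = 1" and "\<And>i. i < length xs \<Longrightarrow> fw xs i \<ge> 0"
proof -
  define n where "n = length xs"
  define m where "m = Med xs"
  define S where "S = (\<Sum>j<n. \<bar>xs ! j - m\<bar>)"
  have "(\<Sum>i<length xs. fw xs i) = 1 \<and> (\<forall>i<length xs. fw xs i \<ge> 0)"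
  proof (cases "\<forall>j<n. xs ! j = xs ! 0")
    case True
    then have "\<And>i. fw xs i = 1 / real n" unfolding fw_def Let_def n_def by simp
    then show ?thesis using assms n_def by auto
  next
    case False
    then obtain j where j: "j < n" "xs ! j \<noteq> xs ! 0" by auto
    have n2: "n \<ge> 2" using j assms n_def by (cases "j = 0") auto
    have Spos: "S > 0"
    proof (rule ccontr)
      assume "\<not> S > 0"
      then have "S = 0" unfolding S_def by (simp add: sum_nonneg leD antisym)
      then have "\<forall>k\<in>{..<n}. \<bar>xs ! k - m\<bar> = 0" unfolding S_def
        by (subst sum_nonneg_eq_0_iff[symmetric]) auto
      then have "xs ! j = m" "xs ! 0 = m" using j n2 by auto
      then show False using j by simp
    qed
    have fwi: "\<And>i. fw xs i = (1 / (real n - 1)) * (1 - \<bar>xs ! i - m\<bar> / S)"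
      unfolding fw_def Let_def n_def[symmetric] m_def[symmetric] S_def[symmetric] using False by auto
    have "(\<Sum>i<n. (1 - \<bar>xs ! i - m\<bar> / S)) = real n - S / S"
      by (simp add: sum_subtractf sum_divide_distrib[symmetric] S_def)
    also have "\<dots> = real n - 1" using Spos by simp
    finally have sm: "(\<Sum>i<n. (1 - \<bar>xs ! i - m\<bar> / S)) = real n - 1" .
    have "(\<Sum>i<n. fw xs i) = (1 / (real n - 1)) * (\<Sum>i<n. (1 - \<bar>xs ! i - m\<bar> / S))"
      by (simp add: fwi sum_distrib_left)
    also have "\<dots> = 1" using sm n2 by simp
    finally have A: "(\<Sum>i<n. fw xs i) = 1" .
    have B: "fw xs i \<ge> 0" if "i < n" for i
    proof -
      have "\<bar>xs ! i - m\<bar> \<le> S" unfolding S_def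
        using that by (intro member_le_sum) auto
      then have "\<bar>xs ! i - m\<bar> / S \<le> 1" using Spos by simp
      then show ?thesis unfolding fwi using n2 by simp
    qed
    show ?thesis using A B n_def by simp
  qed
  then show "(\<Sum>i<length xs. fw xs i) = 1" and "\<And>i. i < length xs \<Longrightarrow> fw xs i \<ge> 0" by auto
qed

lemma H_shift:
  assumes "length xs \<ge> 1"
  shows "H (map (\<lambda>a. a + t) xs) = H xs + t"
proof -
  have "H (map (\<lambda>a. a + t) xs) = (\<Sum>i<length xs. fw xs i * (xs ! i + t))"
    unfolding H_def by (intro sum.cong) (auto simp: fw_shift[OF assms])
  also have "\<dots> = H xs + t * (\<Sum>i<length xs. fw xs i)"
    unfolding H_def by (simp add: algebra_simps sum.distrib sum_distrib_left)
  also have "\<dots> = H xs + t" using fw_facts(1)[OF assms] by simp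
  finally show ?thesis .
qed

lemma H_bounds:
  assumes "in_cube n xs" "n \<ge> 1"
  shows "0 \<le> H xs \<and> H xs \<le> 1"
proof -
  have len: "length xs = n" "length xs \<ge> 1" using assms unfolding in_cube_def by auto
  have b: "\<And>i. i < length xs \<Longrightarrow> 0 \<le> xs ! i \<and> xs ! i \<le> 1"
    using assms(1) unfolding in_cube_def by (auto simp: nth_mem)
  have "0 \<le> H xs" unfolding H_def
    using fw_facts(2)[OF len(2)] b by (intro sum_nonneg mult_nonneg_nonneg) auto
  moreover have "H xs \<le> (\<Sum>i<length xs. fw xs i)" unfolding H_def
    using fw_facts(2)[OF len(2)] b by (intro sum_mono mult_left_le) auto
  ultimately show ?thesis using fw_facts(1)[OF len(2)] by simp
qed

lemma H_rep:
  assumes "n \<ge> 1"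
  shows "H (replicate n c) = c"
proof -
  have "\<And>i. fw (replicate n c) i = 1 / real n" unfolding fw_def Let_def by simp
  then show ?thesis unfolding H_def using assms by simp
qed

theorem corollary5:
  fixes n :: nat
  assumes "n \<ge> 2"
  shows "pre_aggregation n H"
proof -
  have n1: "n \<ge> 1" using assms by simp
  have ri: "r_increasing n H (replicate n 1)"
    unfolding r_increasing_def
  proof (intro allI impI)
    fix x and t :: real
    assume a: "in_cube n x \<and> t > 0 \<and> in_cube n (map2 (\<lambda>a b. a + t * b) x (replicate n 1))"
    then have lx: "length x = n" unfolding in_cube_def by simp
    have "map2 (\<lambda>a b. a + t * b) x (replicate n 1) = map (\<lambda>a. a + t) x"
      using lx by (simp add: list_eq_iff_nth_eq)
    then show "H x \<le> H (map2 (\<lambda>a b. a + t * b) x (replicate n 1))"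
      using H_shift[of x t] lx n1 a by simp
  qed
  have "in_cube n (replicate n 1)" unfolding in_cube_def by simp
  moreover have "replicate n (1::real) \<noteq> replicate n 0" using n1 by (cases n) auto
  ultimately show ?thesis unfolding pre_aggregation_def
    using H_bounds[OF _ n1] H_rep[OF n1] ri by blast
qed

end
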